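(* Let $R\ge1$ and let $\mathbb{G}_1,\dots,\mathbb{G}_R$ be linear arrays with central ULAs $\mathbb{U}_{\mathbb{G}_1},\dots,\mathbb{U}_{\mathbb{G}_R}$ of their difference coarrays. Let $\mathbb{M}_r$ be the multi-generator fractal array built from them, $\mathbb{D}_r$ its difference coarray, $\mathbb{U}_r$ the central ULA of $\mathbb{D}_r$, $N=|\mathbb{M}_r|$ (so $N\le\prod_{i=1}^r|\mathbb{G}_i|$), and $P_r=\prod_{i=1}^r|\mathbb{U}_{\mathbb{G}_i}|$. Then for every $1\le r\le R$, $\left[-\tfrac{P_r-1}{2},\tfrac{P_r-1}{2}\right]\cap\mathbb{Z}\subseteq\mathbb{U}_r$, so $|\mathbb{D}_r|\ge|\mathbb{U}_r|\ge P_r$. Consequently, if there is a constant $c>0$ with $|\mathbb{U}_{\mathbb{G}_i}|\ge c|\mathbb{G}_i|^2$ for all $i$, then $|\mathbb{D}_r|\ge c^rN^2$, i.e. $|\mathbb{D}_r|$ is of order $N^2$ for fixed $r$.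
   Context: A linear array is a finite set $\mathbb{G}\subset\mathbb{Z}$ with $\min\mathbb{G}=0$; its difference coarray is $\mathbb{D}=\{n_1-n_2:n_1,n_2\in\mathbb{G}\}$; its central ULA is the largest set $\{-m,\dots,m\}$ ($m\ge0$) contained in $\mathbb{D}$. Given generators $\mathbb{G}_1,\dots,\mathbb{G}_R$ with central ULAs $\mathbb{U}_{\mathbb{G}_i}$, the multi-generator fractal array is defined by $\mathbb{M}_0=\{0\}$ and $\mathbb{M}_{r+1}=\bigcup_{n\in\mathbb{G}_{r+1}}\big(\mathbb{M}_r+n\prod_{i=1}^{r}|\mathbb{U}_{\mathbb{G}_i}|\big)$ for $0\le r\le R-1$ (empty product $=1$), where $A+t=\{a+t:a\in A\}$. *)

theory Defs
  imports Complex_Main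
begin

definition lin_array :: "int set \<Rightarrow> bool" where
  "lin_array G \<longleftrightarrow> finite G \<and> G \<noteq> {} \<and> Min G = 0"

definition diff_coarray :: "int set \<Rightarrow> int set" where
  "diff_coarray G = {n1 - n2 | n1 n2. n1 \<in> G \<and> n2 \<in> G}"

definition central_ULA :: "int set \<Rightarrow> int set" where
  "central_ULA G = (let m = (GREATEST m::nat. {- int m .. int m} \<subseteq> diff_coarray G)
                    in {- int m .. int m})"

definition ula_prod :: "(nat \<Rightarrow> int set) \<Rightarrow> nat \<Rightarrow> nat" where
  "ula_prod Gs r = (\<Prod>i = 1..r. card (central_ULA (Gs i)))"

fun fractal :: "(nat \<Rightarrow> int set) \<Rightarrow> nat \<Rightarrow> int set" where
  "fractal Gs 0 = {0}"
| "fractal Gs (Suc r) =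
     (\<Union>n\<in>Gs (Suc r). (\<lambda>a. a + n * int (ula_prod Gs r)) ` fractal Gs r)"

end

theory Submission
  imports Defs
begin

lemma lin_fin: "lin_array G \<Longrightarrow> finite G \<and> 0 \<in> G"
  unfolding lin_array_def by (metis Min_in)

lemma diff_fin: "finite X \<Longrightarrow> finite (diff_coarray X)"
proof -
  assume "finite X"
  have "diff_coarray X = (\<lambda>(a,b). a - b) ` (X \<times> X)"
    unfolding diff_coarray_def by auto
  thus ?thesis using \<open>finite X\<close> by simp
qed

lemma diff_mem: "a \<in> X \<Longrightarrow> b \<in> X \<Longrightarrow> a - b \<in> diff_coarray X"
  unfolding diff_coarray_def by blast

lemma cULA:
  assumes "finite X" "0 \<in> X"
  shows "\<exists>m. central_ULA X = {- int m .. int m} \<and> {- int m .. int m} \<subseteq> diff_coarray X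
          \<and> (\<forall>k. {- int k .. int k} \<subseteq> diff_coarray X \<longrightarrow> k \<le> m)"
proof -
  let ?D = "diff_coarray X"
  let ?P = "\<lambda>m::nat. {- int m .. int m} \<subseteq> ?D"
  have fD: "finite ?D" using diff_fin assms(1) .
  have bnd: "\<forall>y. ?P y \<longrightarrow> y \<le> card ?D"
  proof (intro allI impI)
    fix y assume py: "?P y"
    have "card {- int y .. int y} \<le> card ?D" using card_mono[OF fD py] .
    thus "y \<le> card ?D" by simp
  qed
  have p0: "?P 0" using diff_mem[OF assms(2) assms(2)] by simp
  have g1: "?P (Greatest ?P)" by (rule GreatestI_nat[of ?P 0 "card ?D"]) (use p0 bnd in auto)
  have g2: "\<forall>k. ?P k \<longrightarrow> k \<le> Greatest ?P"
  proof (intro allI impI)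
    fix k assume "?P k"
    thus "k \<le> Greatest ?P" by (rule Greatest_le_nat[of ?P k "card ?D"]) (use bnd in blast)
  qed
  have g0: "central_ULA X = {- int (Greatest ?P) .. int (Greatest ?P)}"
    unfolding central_ULA_def Let_def by (rule refl)
  show ?thesis using g0 g1 g2 by (intro exI[of _ "Greatest ?P"] conjI)
qed

lemma frac_fin:
  "\<forall>i\<in>{1..r}. lin_array (Gs i) \<Longrightarrow> finite (fractal Gs r) \<and> 0 \<in> fractal Gs r"
proof (induction r)
  case 0 then show ?case by simp
next
  case (Suc r)
  have G: "finite (Gs (Suc r)) \<and> 0 \<in> Gs (Suc r)" using Suc.prems lin_fin by simp
  have IH: "finite (fractal Gs r) \<and> 0 \<in> fractal Gs r" using Suc by simp
  show ?case using G IH by force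
qed

lemma frac_card:
  "\<forall>i\<in>{1..r}. lin_array (Gs i) \<Longrightarrow> card (fractal Gs r) \<le> (\<Prod>i = 1..r. card (Gs i))"
proof (induction r)
  case 0 then show ?case by simp
next
  case (Suc r)
  have G: "finite (Gs (Suc r))" using Suc.prems lin_fin by simp
  have IH: "card (fractal Gs r) \<le> (\<Prod>i = 1..r. card (Gs i))" using Suc by simp
  have "card (fractal Gs (Suc r)) \<le> (\<Sum>n\<in>Gs (Suc r). card ((\<lambda>a. a + n * int (ula_prod Gs r)) ` fractal Gs r))"
    using card_UN_le[OF G] by simp
  also have "\<dots> \<le> (\<Sum>n\<in>Gs (Suc r). card (fractal Gs r))"
    by (intro sum_mono card_image_le) (use frac_fin Suc.prems in simp)
  also have "\<dots> = card (Gs (Suc r)) * card (fractal Gs r)" by simp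
  also have "\<dots> \<le> card (Gs (Suc r)) * (\<Prod>i = 1..r. card (Gs i))" using IH by simp
  also have "\<dots> = (\<Prod>i = 1..Suc r. card (Gs i))" by (simp add: prod.nat_ivl_Suc' mult.commute)
  finally show ?case .
qed

lemma ula_odd:
  "\<forall>i\<in>{1..r}. lin_array (Gs i) \<Longrightarrow> odd (ula_prod Gs r)"
proof (induction r)
  case 0 then show ?case by (simp add: ula_prod_def)
next
  case (Suc r)
  have G: "finite (Gs (Suc r)) \<and> 0 \<in> Gs (Suc r)" using Suc.prems lin_fin by simp
  then obtain m where "central_ULA (Gs (Suc r)) = {- int m .. int m}" using cULA by blast
  hence "card (central_ULA (Gs (Suc r))) = 2*m+1" by simp
  moreover have "ula_prod Gs (Suc r) = card (central_ULA (Gs (Suc r))) * ula_prod Gs r"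
    by (simp add: ula_prod_def prod.nat_ivl_Suc')
  ultimately show ?case using Suc by simp
qed

lemma main_sub:
  "\<forall>i\<in>{1..r}. lin_array (Gs i) \<Longrightarrow>
    {- int ((ula_prod Gs r - 1) div 2) .. int ((ula_prod Gs r - 1) div 2)} \<subseteq> diff_coarray (fractal Gs r)"
proof (induction r)
  case 0 then show ?case using diff_mem[of 0 "{0}" 0] by (simp add: ula_prod_def)
next
  case (Suc r)
  have G: "finite (Gs (Suc r)) \<and> 0 \<in> Gs (Suc r)" using Suc.prems lin_fin by simp
  then obtain m where m: "central_ULA (Gs (Suc r)) = {- int m .. int m}"
     "{- int m .. int m} \<subseteq> diff_coarray (Gs (Suc r))" using cULA by blast
  define P where "P = ula_prod Gs r"
  define h where "h = (P - 1) div 2"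
  have oP: "odd P" using ula_odd Suc.prems P_def by simp
  hence Ph: "P = 2*h+1" unfolding h_def by presburger
  have IH: "{- int h .. int h} \<subseteq> diff_coarray (fractal Gs r)" using Suc h_def P_def by simp
  have PS: "ula_prod Gs (Suc r) = (2*m+1) * P"
  proof -
    have "card (central_ULA (Gs (Suc r))) = 2*m+1" using m(1) by simp
    thus ?thesis by (simp add: ula_prod_def prod.nat_ivl_Suc' P_def)
  qed
  have hS: "(ula_prod Gs (Suc r) - 1) div 2 = P*m + h" using PS Ph by (simp add: algebra_simps)
  show ?case unfolding hS
  proof
    fix x assume x: "x \<in> {- int (P * m + h)..int (P * m + h)}"
    define q where "q = (x + int h) div int P"
    define s where "s = (x + int h) mod int P - int h"
    have Pp: "int P > 0" using Ph by simp
    have xe: "x = int P * q + s" unfolding q_def s_def by (simp add: algebra_simps)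
    have s1: "0 \<le> (x + int h) mod int P" "(x + int h) mod int P < int P" using Pp by auto
    have "int P = 2 * int h + 1" using Ph by simp
    hence "- int h \<le> s" "s \<le> int h" using s1 s_def by linarith+
    hence sr: "s \<in> {- int h .. int h}" by simp
    have xl: "- int P * int m \<le> x + int h" "x + int h < int P * (int m + 1)" using x Ph
      by (auto simp: algebra_simps)
    have q1: "- int m \<le> q"
    proof -
      have "(int P * (- int m)) \<le> x + int h" using xl(1) by simp
      hence "(int P * (- int m)) div int P \<le> (x + int h) div int P" using zdiv_mono1 Pp by blast
      moreover have "(int P * (- int m)) div int P = - int m" using Pp by (rule nonzero_mult_div_cancel_left[OF order.strict_implies_not_eq[symmetric]])
      ultimately show ?thesis unfolding q_def by simp
    qed
    have q2: "q \<le> int m"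
    proof (rule ccontr)
      assume "\<not> q \<le> int m"
      hence "int m + 1 \<le> q" by simp
      hence "int P * (int m + 1) \<le> int P * q" using Pp by simp
      also have "int P * q \<le> x + int h"
      proof -
        have "int P * q + (x + int h) mod int P = x + int h" unfolding q_def by (rule mult_div_mod_eq)
        thus ?thesis using s1(1) by linarith
      qed
      finally show False using xl(2) by simp
    qed
    obtain a b where ab: "a \<in> fractal Gs r" "b \<in> fractal Gs r" "s = a - b"
      using IH sr unfolding diff_coarray_def by blast
    obtain g1 g2 where g: "g1 \<in> Gs (Suc r)" "g2 \<in> Gs (Suc r)" "q = g1 - g2"
      using m(2) q1 q2 unfolding diff_coarray_def by auto
    have "a + g1 * int P \<in> fractal Gs (Suc r)" "b + g2 * int P \<in> fractal Gs (Suc r)"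
      using ab g by (auto simp: P_def)
    moreover have "x = (a + g1 * int P) - (b + g2 * int P)" using xe ab g by (simp add: algebra_simps)
    ultimately show "x \<in> diff_coarray (fractal Gs (Suc r))" using diff_mem by metis
  qed
qed

theorem theorem9:
  fixes R :: nat and Gs :: "nat \<Rightarrow> int set"
  assumes "R \<ge> 1"
    and "\<forall>i \<in> {1..R}. lin_array (Gs i)"
  shows "\<forall>r \<in> {1..R}.
           card (fractal Gs r) \<le> (\<Prod>i = 1..r. card (Gs i))
         \<and> {x::int. - (real (ula_prod Gs r) - 1) / 2 \<le> real_of_int x
                  \<and> real_of_int x \<le> (real (ula_prod Gs r) - 1) / 2}
             \<subseteq> central_ULA (fractal Gs r)
         \<and> card (diff_coarray (fractal Gs r)) \<ge> card (central_ULA (fractal Gs r))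
         \<and> card (central_ULA (fractal Gs r)) \<ge> ula_prod Gs r
         \<and> (\<forall>c::real. c > 0 \<longrightarrow>
               (\<forall>i \<in> {1..R}. real (card (central_ULA (Gs i))) \<ge> c * real (card (Gs i)) ^ 2) \<longrightarrow>
               real (card (diff_coarray (fractal Gs r))) \<ge> c ^ r * real (card (fractal Gs r)) ^ 2)"
proof
  fix r assume r: "r \<in> {1..R}"
  have A: "\<forall>i\<in>{1..r}. lin_array (Gs i)" using assms(2) r by auto
  have F: "finite (fractal Gs r)" "0 \<in> fractal Gs r" using frac_fin[OF A] by auto
  obtain m where m: "central_ULA (fractal Gs r) = {- int m .. int m}"
    "{- int m .. int m} \<subseteq> diff_coarray (fractal Gs r)"
    "\<forall>k. {- int k .. int k} \<subseteq> diff_coarray (fractal Gs r) \<longrightarrow> k \<le> m"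
    using cULA[OF F] by blast
  define P where "P = ula_prod Gs r"
  define h where "h = (P - 1) div 2"
  have oP: "odd P" using ula_odd[OF A] P_def by simp
  hence Ph: "P = 2*h+1" unfolding h_def by presburger
  have hm: "h \<le> m" using m(3) main_sub[OF A] unfolding h_def P_def by blast
  have C1: "card (fractal Gs r) \<le> (\<Prod>i = 1..r. card (Gs i))" using frac_card[OF A] .
  have C2: "{x::int. - (real (ula_prod Gs r) - 1) / 2 \<le> real_of_int x
                  \<and> real_of_int x \<le> (real (ula_prod Gs r) - 1) / 2}
             \<subseteq> central_ULA (fractal Gs r)"
  proof
    fix x :: int assume "x \<in> {x::int. - (real (ula_prod Gs r) - 1) / 2 \<le> real_of_int x
                  \<and> real_of_int x \<le> (real (ula_prod Gs r) - 1) / 2}"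
    hence "- real h \<le> real_of_int x" "real_of_int x \<le> real h"
      using Ph unfolding P_def[symmetric] by auto
    hence "- int h \<le> x" "x \<le> int h" by linarith+
    thus "x \<in> central_ULA (fractal Gs r)" using hm m(1) by auto
  qed
  have C3: "card (diff_coarray (fractal Gs r)) \<ge> card (central_ULA (fractal Gs r))"
    unfolding m(1) by (rule card_mono[OF diff_fin[OF F(1)] m(2)])
  have C4: "card (central_ULA (fractal Gs r)) \<ge> ula_prod Gs r"
    using m(1) hm Ph unfolding P_def[symmetric] by simp
  have C5: "\<forall>c::real. c > 0 \<longrightarrow>
               (\<forall>i \<in> {1..R}. real (card (central_ULA (Gs i))) \<ge> c * real (card (Gs i)) ^ 2) \<longrightarrow>
               real (card (diff_coarray (fractal Gs r))) \<ge> c ^ r * real (card (fractal Gs r)) ^ 2"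
  proof (intro allI impI)
    fix c :: real assume c: "c > 0"
      and hc: "\<forall>i \<in> {1..R}. real (card (central_ULA (Gs i))) \<ge> c * real (card (Gs i)) ^ 2"
    have "c ^ r * real (card (fractal Gs r)) ^ 2 \<le> c ^ r * (\<Prod>i = 1..r. real (card (Gs i))) ^ 2"
      using C1 c by (intro mult_left_mono power_mono) (auto simp flip: of_nat_prod)
    also have "\<dots> = (\<Prod>i = 1..r. c * real (card (Gs i)) ^ 2)"
      by (simp add: prod.distrib prod_power_distrib)
    also have "\<dots> \<le> (\<Prod>i = 1..r. real (card (central_ULA (Gs i))))"
      using hc r c by (intro prod_mono) auto
    also have "\<dots> = real P" unfolding P_def ula_prod_def by simp
    also have "\<dots> \<le> real (card (diff_coarray (fractal Gs r)))"
      using C3 C4 unfolding P_def by linarith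
    finally show "real (card (diff_coarray (fractal Gs r))) \<ge> c ^ r * real (card (fractal Gs r)) ^ 2" .
  qed
  show "card (fractal Gs r) \<le> (\<Prod>i = 1..r. card (Gs i))
         \<and> {x::int. - (real (ula_prod Gs r) - 1) / 2 \<le> real_of_int x
                  \<and> real_of_int x \<le> (real (ula_prod Gs r) - 1) / 2}
             \<subseteq> central_ULA (fractal Gs r)
         \<and> card (diff_coarray (fractal Gs r)) \<ge> card (central_ULA (fractal Gs r))
         \<and> card (central_ULA (fractal Gs r)) \<ge> ula_prod Gs r
         \<and> (\<forall>c::real. c > 0 \<longrightarrow>
               (\<forall>i \<in> {1..R}. real (card (central_ULA (Gs i))) \<ge> c * real (card (Gs i)) ^ 2) \<longrightarrow>
               real (card (diff_coarray (fractal Gs r))) \<ge> c ^ r * real (card (fractal Gs r)) ^ 2)"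
    using C1 C2 C3 C4 C5 by blast
qed

end
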